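(* Let $g$ be a nonnegative even function on $\mathbb{R}$ with $\int_{\mathbb{R}} g(v)\,dv=1$ and $\int_{\mathbb{R}} g(v)v^2\,dv=1$. Suppose that for some $s\in(0,2]$, $K_1>1$, $K_2>0$, $$|\hat g(\xi)|\leq K_1e^{-K_2|\xi|^s}\quad\text{for all }\xi\in\mathbb{R}.$$ Then there exists $\eta>0$ such that for every $R>\eta$ there exists $K>0$ (depending on $R$) with $$|\hat g(\xi)|\leq e^{-K|\xi|^2}\ \text{ for } |\xi|<R,\qquad |\hat g(\xi)|\leq e^{-K|\xi|^s}\ \text{ for } |\xi|\geq R.$$
   Context: $\hat g(\xi)=\int_{\mathbb{R}} g(v)e^{-i\xi v}dv$. *)

theory Defs
  imports "HOL-Analysis.Analysis"
begin

definition fourier :: "(real \<Rightarrow> real) \<Rightarrow> real \<Rightarrow> complex" where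
  "fourier g \<xi> = (LINT v|lborel. complex_of_real (g v) * cis (- \<xi> * v))"

end

theory Submission
  imports Defs "HOL-Probability.Characteristic_Functions"
begin

lemma cos_lower4: "cos (x::real) \<le> 1 - x^2/2 + x^4/24"
proof -
  have "cmod (iexp x - (\<Sum>k \<le> 3. (\<i> * x)^k / fact k)) \<le> \<bar>x\<bar>^(Suc 3) / fact (Suc 3)"
    by (rule iexp_approx1)
  moreover have "Re (iexp x - (\<Sum>k \<le> 3. (\<i> * x)^k / fact k)) = cos x - (1 - x^2/2)"
    by (simp add: numeral_3_eq_3 fact_numeral Re_exp power2_eq_square)
  ultimately have "cos x - (1 - x^2/2) \<le> \<bar>x\<bar>^4 / 24"
    using abs_Re_le_cmod[of "iexp x - (\<Sum>k \<le> 3. (\<i> * x)^k / fact k)"]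
    by (simp add: fact_numeral)
  then show ?thesis by (simp add: power_abs)
qed

lemma cos_upper2: "1 - x^2/2 \<le> cos (x::real)"
proof -
  define z where "z = iexp x - (\<Sum>k \<le> 1. (\<i> * x)^k / fact k)"
  have "cmod z \<le> \<bar>x\<bar>^(Suc 1) / fact (Suc 1)"
    unfolding z_def by (rule iexp_approx1)
  then have a: "cmod z \<le> x^2/2" by (simp add: power_abs power2_eq_square)
  have b: "Re z = cos x - 1"
    unfolding z_def by (simp add: Re_exp)
  have "\<bar>Re z\<bar> \<le> cmod z" by (rule abs_Re_le_cmod)
  with a b show ?thesis by linarith
qed

lemma one_minus_cos_small: "\<bar>x::real\<bar> \<le> 1 \<Longrightarrow> x^2/3 \<le> 1 - cos x"
proof -
  assume h: "\<bar>x\<bar> \<le> 1"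
  have "x^4 \<le> x^2"
  proof -
    have "x^2 \<le> 1" using h by (simp add: abs_le_square_iff[of x 1, symmetric] abs_square_le_1)
    then have "x^2 * x^2 \<le> 1 * x^2" by (intro mult_right_mono) auto
    then show ?thesis by (simp add: power_numeral_reduce power2_eq_square)
  qed
  with cos_lower4[of x] zero_le_power2[of x] show ?thesis by linarith
qed

theorem proposition7:
  fixes g :: "real \<Rightarrow> real" and s K1 K2 :: real
  assumes nonneg: "\<And>v. g v \<ge> 0"
    and even: "\<And>v. g (- v) = g v"
    and int1: "integrable lborel g"
    and mass: "(LINT v|lborel. g v) = 1"
    and int2: "integrable lborel (\<lambda>v. g v * v\<^sup>2)"
    and var: "(LINT v|lborel. g v * v\<^sup>2) = 1"
    and s: "0 < s" "s \<le> 2"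
    and K1: "K1 > 1" and K2: "K2 > 0"
    and decay: "\<And>\<xi>. cmod (fourier g \<xi>) \<le> K1 * exp (- K2 * \<bar>\<xi>\<bar> powr s)"
  shows "\<exists>\<eta>>0. \<forall>R>\<eta>. \<exists>K>0.
           (\<forall>\<xi>. \<bar>\<xi>\<bar> < R \<longrightarrow> cmod (fourier g \<xi>) \<le> exp (- K * \<bar>\<xi>\<bar>\<^sup>2)) \<and>
           (\<forall>\<xi>. \<bar>\<xi>\<bar> \<ge> R \<longrightarrow> cmod (fourier g \<xi>) \<le> exp (- K * \<bar>\<xi>\<bar> powr s))"
proof -
  have gm[measurable]: "g \<in> borel_measurable lborel" using int1 by (rule borel_measurable_integrable)
  have intb: "integrable lborel (\<lambda>v. g v * h v)" if hm: "h \<in> borel_measurable lborel"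
    and hb: "\<And>v. \<bar>h v\<bar> \<le> 1" for h
  proof (rule Bochner_Integration.integrable_bound[OF int1])
    show "(\<lambda>v. g v * h v) \<in> borel_measurable lborel" using hm by measurable
    show "AE x in lborel. norm (g x * h x) \<le> norm (g x)"
      using hb nonneg by (auto simp: abs_mult intro!: mult_left_le)
  qed
  have ic: "integrable lborel (\<lambda>v. g v * cos (\<xi> * v))" for \<xi>
    by (rule intb) auto
  have isn: "integrable lborel (\<lambda>v. g v * sin (\<xi> * v))" for \<xi>
    by (rule intb) auto
  define \<phi> where "\<phi> \<xi> = (LINT v|lborel. g v * cos (\<xi> * v))" for \<xi>
  have sin0: "(LINT v|lborel. g v * sin (\<xi> * v)) = 0" for \<xi>
  proof -
    have "(LINT v|lborel. g v * sin (\<xi> * v)) = \<bar>-1::real\<bar> *\<^sub>R (LINT x|lborel. g (0 + -1 * x) * sin (\<xi> * (0 + -1 * x)))"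
      by (rule lborel_integral_real_affine) simp
    also have "\<dots> = - (LINT v|lborel. g v * sin (\<xi> * v))"
      by (simp add: even)
    finally show ?thesis by simp
  qed
  have four: "fourier g \<xi> = complex_of_real (\<phi> \<xi>)" for \<xi>
  proof -
    have "fourier g \<xi> = (LINT v|lborel. complex_of_real (g v * cos (\<xi> * v)) - \<i> * complex_of_real (g v * sin (\<xi> * v)))"
      unfolding fourier_def by (intro Bochner_Integration.integral_cong) (auto simp: complex_eq_iff)
    also have "\<dots> = complex_of_real (\<phi> \<xi>) - \<i> * complex_of_real (LINT v|lborel. g v * sin (\<xi> * v))"
    proof -
      have i1: "integrable lborel (\<lambda>v. complex_of_real (g v * cos (\<xi> * v)))"
        using ic[of \<xi>] by (rule integrable_of_real)
      have i2: "integrable lborel (\<lambda>v. \<i> * complex_of_real (g v * sin (\<xi> * v)))"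
        using isn[of \<xi>] by (intro integrable_mult_right integrable_of_real)
      have "(LINT v|lborel. complex_of_real (g v * cos (\<xi> * v)) - \<i> * complex_of_real (g v * sin (\<xi> * v)))
          = (LINT v|lborel. complex_of_real (g v * cos (\<xi> * v))) - (LINT v|lborel. \<i> * complex_of_real (g v * sin (\<xi> * v)))"
        by (rule Bochner_Integration.integral_diff[OF i1 i2])
      also have "\<dots> = complex_of_real (\<phi> \<xi>) - \<i> * complex_of_real (LINT v|lborel. g v * sin (\<xi> * v))"
        unfolding \<phi>_def integral_mult_right_zero integral_complex_of_real ..
      finally show ?thesis .
    qed
    finally show ?thesis by (simp add: sin0)
  qed
  have A: "\<bar>\<phi> \<xi>\<bar> \<le> K1 * exp (- K2 * \<bar>\<xi>\<bar> powr s)" for \<xi>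
    using decay[of \<xi>] by (simp add: four)
  have om: "1 - \<phi> \<xi> = (LINT v|lborel. g v * (1 - cos (\<xi> * v)))" for \<xi>
    using int1 ic[of \<xi>] by (simp add: right_diff_distrib \<phi>_def mass)
  have op: "1 + \<phi> \<xi> = (LINT v|lborel. g v * (1 + cos (\<xi> * v)))" for \<xi>
    using int1 ic[of \<xi>] by (simp add: distrib_left \<phi>_def mass)
  have B: "1 - \<xi>^2/2 \<le> \<phi> \<xi>" for \<xi>
  proof -
    have "(LINT v|lborel. g v * (1 - cos (\<xi> * v))) \<le> (LINT v|lborel. \<xi>^2/2 * (g v * v\<^sup>2))"
    proof (rule Bochner_Integration.integral_mono)
      show "integrable lborel (\<lambda>v. g v * (1 - cos (\<xi> * v)))"
        using int1 ic[of \<xi>] by (simp add: right_diff_distrib)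
      show "integrable lborel (\<lambda>v. \<xi>^2/2 * (g v * v\<^sup>2))" using int2 by simp
      fix v
      have "1 - cos (\<xi> * v) \<le> (\<xi> * v)\<^sup>2 / 2" using cos_upper2[of "\<xi> * v"] by simp
      then have "g v * (1 - cos (\<xi> * v)) \<le> g v * ((\<xi> * v)\<^sup>2 / 2)"
        using nonneg[of v] by (rule mult_left_mono)
      then show "g v * (1 - cos (\<xi> * v)) \<le> \<xi>^2/2 * (g v * v\<^sup>2)"
        by (simp add: power_mult_distrib mult_ac)
    qed
    then show ?thesis using om[of \<xi>] var by simp
  qed
  have C: "1 - \<phi> (2 * \<xi>) \<le> 4 * (1 - \<bar>\<phi> \<xi>\<bar>)" for \<xi>
  proof -
    have pw: "1 - cos (2 * \<xi> * v) = 2 * (1 - cos (\<xi> * v)) * (1 + cos (\<xi> * v))" for v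
    proof -
      have "cos (2 * \<xi> * v) = 2 * cos (\<xi> * v)^2 - 1" using cos_double_cos[of "\<xi> * v"] by (simp add: mult.assoc)
      then show ?thesis by (simp add: algebra_simps power2_eq_square)
    qed
    have i1: "integrable lborel (\<lambda>v. g v * (1 - cos (\<xi> * v)))" for \<xi>
      using int1 ic[of \<xi>] by (simp add: right_diff_distrib)
    have i2: "integrable lborel (\<lambda>v. g v * (1 + cos (\<xi> * v)))"
      using int1 ic[of \<xi>] by (simp add: distrib_left)
    have c1: "1 - \<phi> (2 * \<xi>) \<le> 4 * (1 - \<phi> \<xi>)"
    proof -
      have "(LINT v|lborel. g v * (1 - cos (2 * \<xi> * v))) \<le> (LINT v|lborel. 4 * (g v * (1 - cos (\<xi> * v))))"
      proof (rule Bochner_Integration.integral_mono)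
        show "integrable lborel (\<lambda>v. g v * (1 - cos (2 * \<xi> * v)))" by (rule i1)
        show "integrable lborel (\<lambda>v. 4 * (g v * (1 - cos (\<xi> * v))))" using i1 by simp
        fix v
        have "1 - cos (2 * \<xi> * v) \<le> 4 * (1 - cos (\<xi> * v))"
          unfolding pw using mult_left_mono[of "1 + cos (\<xi> * v)" 2 "2 * (1 - cos (\<xi> * v))"] by simp
        then have "g v * (1 - cos (2 * \<xi> * v)) \<le> g v * (4 * (1 - cos (\<xi> * v)))"
          using nonneg[of v] by (rule mult_left_mono)
        then show "g v * (1 - cos (2 * \<xi> * v)) \<le> 4 * (g v * (1 - cos (\<xi> * v)))"
          by (simp add: mult_ac)
      qed
      then show ?thesis using om[of "2 * \<xi>"] om[of \<xi>] by simp
    qed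
    have c2: "1 - \<phi> (2 * \<xi>) \<le> 4 * (1 + \<phi> \<xi>)"
    proof -
      have "(LINT v|lborel. g v * (1 - cos (2 * \<xi> * v))) \<le> (LINT v|lborel. 4 * (g v * (1 + cos (\<xi> * v))))"
      proof (rule Bochner_Integration.integral_mono)
        show "integrable lborel (\<lambda>v. g v * (1 - cos (2 * \<xi> * v)))" by (rule i1)
        show "integrable lborel (\<lambda>v. 4 * (g v * (1 + cos (\<xi> * v))))" using i2 by simp
        fix v
        have "1 - cos (2 * \<xi> * v) \<le> 4 * (1 + cos (\<xi> * v))"
          unfolding pw by (rule mult_right_mono) (auto simp: cos_le_one add.commute[of 1] intro: order_trans[OF _ cos_le_one] ; insert cos_ge_minus_one[of "\<xi> * v"] cos_le_one[of "\<xi> * v"], linarith)+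
        then have "g v * (1 - cos (2 * \<xi> * v)) \<le> g v * (4 * (1 + cos (\<xi> * v)))"
          using nonneg[of v] by (rule mult_left_mono)
        then show "g v * (1 - cos (2 * \<xi> * v)) \<le> 4 * (g v * (1 + cos (\<xi> * v)))"
          by (simp add: mult_ac)
      qed
      then show ?thesis using om[of "2 * \<xi>"] op[of \<xi>] by simp
    qed
    show ?thesis using c1 c2 by (cases "\<phi> \<xi> \<ge> 0") auto
  qed
  define u where "u \<xi> = 1 - \<bar>\<phi> \<xi>\<bar>" for \<xi>
  have E: "u (2 * \<xi>) \<le> 4 * u \<xi>" for \<xi>
    using C[of \<xi>] abs_ge_self[of "\<phi> (2 * \<xi>)"] unfolding u_def by linarith
  define sq where "sq n v = g v * v\<^sup>2 * indicator {- real n..real n} v" for n :: nat and v :: real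
  have sqm: "sq n \<in> borel_measurable lborel" for n unfolding sq_def by measurable
  have sqi: "integrable lborel (sq n)" for n
  proof (rule Bochner_Integration.integrable_bound[OF int2 sqm])
    show "AE x in lborel. norm (sq n x) \<le> norm (g x * x\<^sup>2)"
      using nonneg by (auto simp: sq_def indicator_def abs_mult)
  qed
  have lim: "(\<lambda>n. LINT v|lborel. sq n v) \<longlonglongrightarrow> (LINT v|lborel. g v * v\<^sup>2)"
  proof (rule integral_dominated_convergence[where w="\<lambda>v. g v * v\<^sup>2"])
    show "(\<lambda>v. g v * v\<^sup>2) \<in> borel_measurable lborel" by measurable
    show "\<And>n. sq n \<in> borel_measurable lborel" by (rule sqm)
    show "integrable lborel (\<lambda>v. g v * v\<^sup>2)" by (rule int2)
    show "AE v in lborel. (\<lambda>n. sq n v) \<longlonglongrightarrow> g v * v\<^sup>2"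
    proof (rule AE_I2)
      fix v :: real
      obtain N :: nat where N: "\<bar>v\<bar> < real N" using reals_Archimedean2 by blast
      have "eventually (\<lambda>n. sq n v = g v * v\<^sup>2) sequentially"
      proof (rule eventually_sequentiallyI[of N])
        fix n assume "N \<le> n"
        then have "real N \<le> real n" by simp
        then have "\<bar>v\<bar> \<le> real n" using N by linarith
        then show "sq n v = g v * v\<^sup>2" by (simp add: sq_def indicator_def abs_le_iff)
      qed
      then show "(\<lambda>n. sq n v) \<longlonglongrightarrow> g v * v\<^sup>2" by (rule tendsto_eventually)
    qed
    show "\<And>n. AE v in lborel. norm (sq n v) \<le> g v * v\<^sup>2"
      using nonneg by (auto simp: sq_def indicator_def abs_mult)
  qed
  from order_tendstoD(1)[OF lim, of "3/4"] var obtain n where n: "3/4 < (LINT v|lborel. sq n v)"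
    by (auto simp: eventually_sequentially)
  define M where "M = real n"
  define \<delta> where "\<delta> = 1 / (M + 1)"
  have \<delta>pos: "0 < \<delta>" "\<delta> \<le> 1" unfolding \<delta>_def M_def by auto
  have D: "\<xi>^2/4 \<le> 1 - \<phi> \<xi>" if xd: "\<bar>\<xi>\<bar> \<le> \<delta>" for \<xi>
  proof -
    have "(LINT v|lborel. \<xi>^2/3 * sq n v) \<le> (LINT v|lborel. g v * (1 - cos (\<xi> * v)))"
    proof (rule Bochner_Integration.integral_mono)
      show "integrable lborel (\<lambda>v. \<xi>^2/3 * sq n v)" using sqi[of n] by simp
      show "integrable lborel (\<lambda>v. g v * (1 - cos (\<xi> * v)))"
        using int1 ic[of \<xi>] by (simp add: right_diff_distrib)
      fix v
      show "\<xi>^2/3 * sq n v \<le> g v * (1 - cos (\<xi> * v))"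
      proof (cases "\<bar>v\<bar> \<le> M")
        case True
        have "\<bar>\<xi> * v\<bar> \<le> 1"
        proof -
          have "\<bar>\<xi> * v\<bar> = \<bar>\<xi>\<bar> * \<bar>v\<bar>" by (simp add: abs_mult)
          also have "\<dots> \<le> \<delta> * M" using xd True by (intro mult_mono) auto
          also have "\<dots> \<le> 1" unfolding \<delta>_def M_def by (simp add: field_simps)
          finally show ?thesis .
        qed
        then have "(\<xi> * v)\<^sup>2/3 \<le> 1 - cos (\<xi> * v)" by (rule one_minus_cos_small)
        then have "g v * ((\<xi> * v)\<^sup>2/3) \<le> g v * (1 - cos (\<xi> * v))"
          using nonneg[of v] by (rule mult_left_mono)
        moreover have "sq n v = g v * v\<^sup>2" using True by (simp add: sq_def M_def indicator_def abs_le_iff)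
        ultimately show ?thesis by (simp add: power_mult_distrib mult_ac)
      next
        case False
        then have "sq n v = 0" unfolding sq_def M_def indicator_def by auto
        moreover have "0 \<le> g v * (1 - cos (\<xi> * v))" using nonneg[of v] by simp
        ultimately show ?thesis by simp
      qed
    qed
    moreover have "(LINT v|lborel. \<xi>^2/3 * sq n v) = \<xi>^2/3 * (LINT v|lborel. sq n v)" by simp
    moreover have "\<xi>^2/3 * (3/4) \<le> \<xi>^2/3 * (LINT v|lborel. sq n v)" using n by (intro mult_left_mono) auto
    ultimately show ?thesis using om[of \<xi>] by simp
  qed
  define B where "B = 2 * ln (2 * K1) / K2"
  have lnpos: "0 < ln (2*K1)" using K1 by simp
  have Bpos: "0 < B" unfolding B_def using lnpos K2 by simp
  define \<eta> where "\<eta> = B powr (1/s)"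
  have etapos: "0 < \<eta>" unfolding \<eta>_def using Bpos by simp
  have big: "B \<le> \<bar>\<xi>\<bar> powr s" if "\<eta> \<le> \<bar>\<xi>\<bar>" for \<xi>
  proof -
    have "B = \<eta> powr s" unfolding \<eta>_def using Bpos s by (simp add: powr_powr)
    also have "\<dots> \<le> \<bar>\<xi>\<bar> powr s" using that etapos s by (intro powr_mono2) auto
    finally show ?thesis .
  qed
  have expK: "K1 * exp (- K2 * \<bar>\<xi>\<bar> powr s) \<le> exp (- K * \<bar>\<xi>\<bar> powr s)"
    if "\<eta> \<le> \<bar>\<xi>\<bar>" "0 \<le> K" "K \<le> K2/2" for \<xi> K
  proof -
    let ?a = "\<bar>\<xi>\<bar> powr s"
    have a: "B \<le> ?a" using big that(1) .
    have "ln K1 \<le> ln (2*K1)" using K1 by simp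
    also have "ln (2*K1) = K2/2 * B" unfolding B_def using K2 by simp
    also have "K2/2 * B \<le> (K2 - K) * ?a" using a Bpos that K2 by (intro mult_mono) auto
    finally have "ln K1 + - K2 * ?a \<le> - K * ?a" by (simp add: algebra_simps)
    then have "exp (ln K1 + - K2 * ?a) \<le> exp (- K * ?a)" by simp
    moreover have "K1 * exp (- K2 * ?a) = exp (ln K1 + - K2 * ?a)" using K1 by (simp only: exp_add exp_ln)
    ultimately show ?thesis by simp
  qed
  have F: "1/2 \<le> u \<xi>" if "\<eta> \<le> \<bar>\<xi>\<bar>" for \<xi>
  proof -
    have "ln (2*K1) \<le> K2 * \<bar>\<xi>\<bar> powr s"
    proof -
      have "K2 * B \<le> K2 * \<bar>\<xi>\<bar> powr s" using big[OF that] K2 by simp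
      moreover have "K2 * B = 2 * ln (2*K1)" unfolding B_def using K2 by simp
      ultimately show ?thesis using lnpos by linarith
    qed
    then have "exp (- K2 * \<bar>\<xi>\<bar> powr s) \<le> exp (- ln (2*K1))" by simp
    also have "exp (- ln (2*K1)) = 1 / (2*K1)" using K1 by (simp add: exp_minus inverse_eq_divide)
    finally have "K1 * exp (- K2 * \<bar>\<xi>\<bar> powr s) \<le> K1 * (1/(2*K1))" using K1 by (intro mult_left_mono) auto
    then have "\<bar>\<phi> \<xi>\<bar> \<le> 1/2" using A[of \<xi>] K1 by simp
    then show ?thesis unfolding u_def by simp
  qed
  have G: "1 / (2 * 4^k) \<le> u \<xi>" if "\<eta> / 2^k \<le> \<bar>\<xi>\<bar>" for k \<xi>
    using that
  proof (induction k arbitrary: \<xi>)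
    case 0 then show ?case using F by simp
  next
    case (Suc k)
    have "\<eta> / 2^k \<le> \<bar>2 * \<xi>\<bar>" using Suc.prems by (simp add: field_simps abs_mult)
    then have "1 / (2 * 4^k) \<le> u (2 * \<xi>)" by (rule Suc.IH)
    also have "\<dots> \<le> 4 * u \<xi>" by (rule E)
    finally show ?case by (simp add: field_simps)
  qed
  obtain m :: nat where "\<eta> / \<delta> < 2^m" using real_arch_pow[of 2 "\<eta> / \<delta>"] by auto
  then have hm: "\<eta> / 2^m < \<delta>" using \<delta>pos by (simp add: field_simps)
  show ?thesis
  proof (rule exI[of _ \<eta>], intro conjI allI impI etapos)
    fix R assume R: "\<eta> < R"
    define c :: real where "c = 1 / (2 * 4^m)"
    define K where "K = min (1/4) (min (K2/2) (c / R^2))"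
    have Rpos: "0 < R" using R etapos by linarith
    have cpos: "0 < c" unfolding c_def by simp
    have Kpos: "0 < K" unfolding K_def using K2 cpos Rpos by simp
    have K14: "K \<le> 1/4" "K \<le> K2/2" "K \<le> c / R^2" unfolding K_def by (simp_all only: min.bounded_iff order_refl simp_thms)
    show "\<exists>K>0. (\<forall>\<xi>. \<bar>\<xi>\<bar> < R \<longrightarrow> cmod (fourier g \<xi>) \<le> exp (- K * \<bar>\<xi>\<bar>\<^sup>2)) \<and>
           (\<forall>\<xi>. \<bar>\<xi>\<bar> \<ge> R \<longrightarrow> cmod (fourier g \<xi>) \<le> exp (- K * \<bar>\<xi>\<bar> powr s))"
    proof (rule exI[of _ K], intro conjI allI impI Kpos)
      fix \<xi> assume xi: "\<bar>\<xi>\<bar> < R"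
      have uK: "K * \<bar>\<xi>\<bar>\<^sup>2 \<le> u \<xi>"
      proof (cases "\<bar>\<xi>\<bar> \<le> \<delta>")
        case True
        have "\<bar>\<xi>\<bar> \<le> 1" using True \<delta>pos by linarith
        then have x1: "\<xi>^2 \<le> 1" by (simp add: abs_square_le_1)
        have d1: "\<xi>^2/4 \<le> 1 - \<phi> \<xi>" using D True .
        have d2: "\<xi>^2/4 \<le> 1 + \<phi> \<xi>" using B[of \<xi>] x1 by linarith
        have "\<xi>^2/4 \<le> u \<xi>" unfolding u_def using d1 d2 by (cases "\<phi> \<xi> \<ge> 0") auto
        moreover have "K * \<xi>\<^sup>2 \<le> 1/4 * \<xi>^2" using K14(1) by (intro mult_right_mono) auto
        ultimately show ?thesis by simp
      next
        case False
        then have "\<eta> / 2^m \<le> \<bar>\<xi>\<bar>" using hm by linarith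
        then have cu: "c \<le> u \<xi>" unfolding c_def by (rule G)
        have "\<bar>\<xi>\<bar>\<^sup>2 \<le> R\<^sup>2" using xi by (intro power_mono) auto
        then have "K * \<bar>\<xi>\<bar>\<^sup>2 \<le> c / R^2 * R^2" using K14(3) Kpos by (intro mult_mono) auto
        also have "c / R^2 * R^2 = c" using Rpos by simp
        finally show ?thesis using cu by linarith
      qed
      have "cmod (fourier g \<xi>) = 1 - u \<xi>" unfolding u_def four by simp
      also have "\<dots> \<le> exp (- u \<xi>)" using exp_ge_add_one_self[of "- u \<xi>"] by simp
      also have "\<dots> \<le> exp (- K * \<bar>\<xi>\<bar>\<^sup>2)" using uK by simp
      finally show "cmod (fourier g \<xi>) \<le> exp (- K * \<bar>\<xi>\<bar>\<^sup>2)" .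
    next
      fix \<xi> assume xi: "R \<le> \<bar>\<xi>\<bar>"
      have "cmod (fourier g \<xi>) \<le> K1 * exp (- K2 * \<bar>\<xi>\<bar> powr s)" by (rule decay)
      also have "\<dots> \<le> exp (- K * \<bar>\<xi>\<bar> powr s)" using R xi Kpos K14(2) by (intro expK) auto
      finally show "cmod (fourier g \<xi>) \<le> exp (- K * \<bar>\<xi>\<bar> powr s)" .
    qed
  qed
qed

end
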